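(* The unrestricted black box complexity of the class of affine OneMax functions satisfies $B_{\mathcal{F}}=O(n^{10}\log^2 n)$.
   Context: Identify $\{0,1\}$ with $\mathbb{F}_2$. $\ell(x)=\sum_{i=1}^n x_i$ (real sum). $\mathcal{F}$ is the set of functions $f(x)=\ell(Mx+b)$ on $\{0,1\}^n$ with $M\in\mathrm{GL}(n,\mathbb{F}_2)$, $b\in\mathbb{F}_2^n$ ($Mx+b$ over $\mathbb{F}_2$). For a class $\mathcal{C}$ of functions $\{0,1\}^n\to\mathbb{R}$, its (unrestricted) black box complexity is $B_{\mathcal{C}}=\inf_{A}\sup_{f\in\mathcal{C}}\mathbb{E}(T(A,f))$, where $A$ ranges over all randomized black-box search algorithms (which adaptively query function values) and $T(A,f)$ is the number of evaluations of $f$ made by $A$ until a global maximizer of $f$ is evaluated for the first time. *)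

theory Defs
  imports "HOL-Probability.Probability" "HOL-Library.Z2" "Jordan_Normal_Form.Matrix"
begin

definition onemax :: "nat \<Rightarrow> bit Matrix.vec \<Rightarrow> real" where
  "onemax n y = (\<Sum>i<n. if Matrix.vec_index y i = 1 then 1 else 0)"

definition affine_onemax :: "nat \<Rightarrow> (bit Matrix.vec \<Rightarrow> real) set" where
  "affine_onemax n = {f. \<exists>M b. M \<in> carrier_mat n n \<and> invertible_mat M \<and> b \<in> carrier_vec n
      \<and> f = (\<lambda>x. onemax n (Matrix.mult_mat_vec M x + b))}"

text \<open>A randomized black-box algorithm: given the history of queried points and their
  function values, it chooses a probability distribution for the next query.\<close>
type_synonym bb_alg = "(bit Matrix.vec \<times> real) list \<Rightarrow> bit Matrix.vec pmf"

definition valid_alg :: "nat \<Rightarrow> bb_alg \<Rightarrow> bool" where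
  "valid_alg n A = (\<forall>h. set_pmf (A h) \<subseteq> carrier_vec n)"

fun hist :: "bb_alg \<Rightarrow> (bit Matrix.vec \<Rightarrow> real) \<Rightarrow> nat \<Rightarrow> (bit Matrix.vec \<times> real) list pmf" where
  "hist A f 0 = return_pmf []"
| "hist A f (Suc t) = bind_pmf (hist A f t) (\<lambda>h. map_pmf (\<lambda>x. h @ [(x, f x)]) (A h))"

definition maximizers :: "nat \<Rightarrow> (bit Matrix.vec \<Rightarrow> real) \<Rightarrow> bit Matrix.vec set" where
  "maximizers n f = {x \<in> carrier_vec n. \<forall>y \<in> carrier_vec n. f y \<le> f x}"

text \<open>E(T(A,f)) = sum over t \<ge> 0 of Pr[T > t], where T > t iff none of the first t queries
  is a global maximizer.\<close>
definition expected_runtime :: "nat \<Rightarrow> bb_alg \<Rightarrow> (bit Matrix.vec \<Rightarrow> real) \<Rightarrow> ennreal" where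
  "expected_runtime n A f =
     (\<Sum>t. ennreal (measure_pmf.prob (hist A f t) {h. \<forall>p \<in> set h. fst p \<notin> maximizers n f}))"

definition bb_complexity :: "nat \<Rightarrow> (bit Matrix.vec \<Rightarrow> real) set \<Rightarrow> ennreal" where
  "bb_complexity n C = (INF A \<in> {A. valid_alg n A}. SUP f \<in> C. expected_runtime n A f)"

end

theory Submission
  imports Defs
begin


lemma bit_cases2: "(x::bit) = 0 \<or> x = 1" by (cases x) auto

lemma bit_add_self[simp]: "(b::bit) + b = 0" using bit_cases2[of b] by auto

lemma bit_add_self2[simp]: "(a::bit) + b + b = a" by (metis add.assoc bit_add_self add_0_right)

lemma UNIV_bit: "(UNIV::bit set) = {0,1}" using bit_cases2 by auto

lemma card_bit: "card (UNIV::bit set) = 2" unfolding UNIV_bit by simp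

lemma finite_bit: "finite (UNIV::bit set)" by (simp add: UNIV_bit)

lemma carrier_vec_lists: "(carrier_vec n :: bit Matrix.vec set) = vec_of_list ` {xs. set xs \<subseteq> UNIV \<and> length xs = n}"
proof
  show "(carrier_vec n :: bit Matrix.vec set) \<subseteq> vec_of_list ` {xs. set xs \<subseteq> UNIV \<and> length xs = n}"
  proof
    fix v :: "bit Matrix.vec" assume "v \<in> carrier_vec n"
    have "v = vec_of_list (list_of_vec v)" by (rule vec_list[symmetric])
    moreover have "length (list_of_vec v) = n"
      using \<open>v \<in> carrier_vec n\<close> length_list_of_vec[of v] unfolding carrier_vec_def by blast
    then have "list_of_vec v \<in> {xs. set xs \<subseteq> UNIV \<and> length xs = n}" by blast
    ultimately show "v \<in> vec_of_list ` {xs. set xs \<subseteq> UNIV \<and> length xs = n}"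
      by (rule image_eqI)
  qed
next
  show "vec_of_list ` {xs. set xs \<subseteq> UNIV \<and> length xs = n} \<subseteq> (carrier_vec n :: bit Matrix.vec set)"
  proof
    fix v :: "bit Matrix.vec" assume "v \<in> vec_of_list ` {xs. set xs \<subseteq> UNIV \<and> length xs = n}"
    then obtain xs where xs: "v = vec_of_list xs" "length xs = n" by blast
    then have "dim_vec v = n" using dim_vec_of_list[of xs] by simp
    then show "v \<in> carrier_vec n" unfolding carrier_vec_def by blast
  qed
qed

lemma finite_V: "finite (carrier_vec n :: bit Matrix.vec set)"
  unfolding carrier_vec_lists by (rule finite_imageI) (rule finite_lists_length_eq[OF finite_bit])

lemma card_V_le: "card (carrier_vec n :: bit Matrix.vec set) \<le> 2 ^ n"
proof -
  have "card (carrier_vec n :: bit Matrix.vec set) \<le> card {xs. set xs \<subseteq> (UNIV::bit set) \<and> length xs = n}"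
    unfolding carrier_vec_lists
    by (rule card_image_le) (rule finite_lists_length_eq[OF finite_bit])
  also have "\<dots> = 2 ^ n" using card_lists_length_eq[OF finite_bit, of n] card_bit by simp
  finally show ?thesis .
qed

lemma card_V_pos: "card (carrier_vec n :: bit Matrix.vec set) > 0"
proof -
  have "(0\<^sub>v n :: bit Matrix.vec) \<in> carrier_vec n" by simp
  then show ?thesis using finite_V[of n] by (metis card_gt_0_iff empty_iff)
qed

definition chi :: "bit Matrix.vec \<Rightarrow> bit Matrix.vec \<Rightarrow> real" where
  "chi a x = (if scalar_prod a x = 0 then 1 else -1)"

lemma chi_add:
  assumes "a \<in> carrier_vec n" "x \<in> carrier_vec n" "y \<in> carrier_vec n"
  shows "chi a (x + y) = chi a x * chi a y"
proof -
  have "scalar_prod a (x + y) = scalar_prod a x + scalar_prod a y"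
    using scalar_prod_add_distrib[OF assms] .
  then show ?thesis unfolding chi_def
    using bit_cases2[of "scalar_prod a x"] bit_cases2[of "scalar_prod a y"] by auto
qed

lemma chi_add1:
  assumes "a \<in> carrier_vec n" "b \<in> carrier_vec n" "x \<in> carrier_vec n"
  shows "chi (a + b) x = chi a x * chi b x"
proof -
  have "scalar_prod (a + b) x = scalar_prod a x + scalar_prod b x"
    using add_scalar_prod_distrib[OF assms] .
  then show ?thesis unfolding chi_def
    using bit_cases2[of "scalar_prod a x"] bit_cases2[of "scalar_prod b x"] by auto
qed

lemma chi_comm:
  assumes "a \<in> carrier_vec n" "x \<in> carrier_vec n" shows "chi a x = chi x a"
proof -
  have e: "scalar_prod a x = scalar_prod x a" by (rule comm_scalar_prod[OF assms])
  show ?thesis unfolding chi_def e by (rule refl)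
qed

lemma vec_eqI_n:
  assumes "v \<in> carrier_vec n" "w \<in> carrier_vec n" "\<And>i. i < n \<Longrightarrow> vec_index v i = vec_index w i"
  shows "v = w"
proof (rule eq_vecI)
  have "dim_vec v = n" "dim_vec w = n" using assms(1,2) unfolding carrier_vec_def by blast+
  then show "dim_vec v = dim_vec w" by simp
  fix i assume "i < dim_vec w"
  then show "vec_index v i = vec_index w i" using assms(3) \<open>dim_vec w = n\<close> by simp
qed

lemma add_self_vec:
  assumes "(x::bit Matrix.vec) \<in> carrier_vec n" shows "x + x = 0\<^sub>v n"
proof (rule vec_eqI_n[of _ n])
  show "x + x \<in> carrier_vec n" using assms by simp
  show "0\<^sub>v n \<in> carrier_vec n" by simp
  fix i assume i: "i < n"
  have d: "dim_vec x = n" using assms unfolding carrier_vec_def by blast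
  show "vec_index (x + x) i = vec_index (0\<^sub>v n) i" using i d by simp
qed

lemma sum_chi:
  assumes w: "w \<in> carrier_vec n"
  shows "(\<Sum>x\<in>carrier_vec n. chi w x) = (if w = 0\<^sub>v n then real (card (carrier_vec n :: bit Matrix.vec set)) else 0)"
proof (cases "w = 0\<^sub>v n")
  case True
  then show ?thesis by (simp add: chi_def)
next
  case False
  have "\<exists>j<n. vec_index w j = 1"
  proof (rule ccontr)
    assume "\<not> ?thesis"
    then have "w = 0\<^sub>v n" using w by (intro vec_eqI_n[of _ n]) auto
    then show False using False by simp
  qed
  then obtain j where j: "j < n" "vec_index w j = 1" by auto
  define e where "e = (unit_vec n j :: bit Matrix.vec)"
  have e: "e \<in> carrier_vec n" unfolding e_def by simp
  have we: "scalar_prod w e = 1" unfolding e_def using j w by simp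
  have inv: "x + e + e = x" if x: "x \<in> carrier_vec n" for x
  proof (rule vec_eqI_n[of _ n])
    show "x + e + e \<in> carrier_vec n" using x e by simp
    show "x \<in> carrier_vec n" by (rule x)
    fix i assume i: "i < n"
    have d: "dim_vec x = n" using x unfolding carrier_vec_def by blast
    have de: "dim_vec e = n" using e unfolding carrier_vec_def by blast
    have "vec_index (x + e + e) i = vec_index x i + vec_index e i + vec_index e i" using i d de by simp
    then show "vec_index (x + e + e) i = vec_index x i" by (simp only: bit_add_self2)
  qed
  have bij: "bij_betw (\<lambda>x. x + e) (carrier_vec n) (carrier_vec n)"
    by (rule bij_betwI[where g="\<lambda>x. x + e"]) (use e inv in auto)
  have 1: "(\<Sum>x\<in>carrier_vec n. chi w (x + e)) = (\<Sum>x\<in>carrier_vec n. chi w x)"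
    using sum.reindex_bij_betw[OF bij, of "chi w"] .
  have 2: "chi w (x + e) = - chi w x" if "x \<in> carrier_vec n" for x
    using chi_add[OF w that e] we by (simp add: chi_def)
  have "(\<Sum>x\<in>carrier_vec n. - chi w x) = (\<Sum>x\<in>carrier_vec n. chi w (x + e))"
    by (rule sum.cong) (use 2 in auto)
  then have "(\<Sum>x\<in>carrier_vec n. - chi w x) = (\<Sum>x\<in>carrier_vec n. chi w x)"
    using 1 by simp
  then have "(\<Sum>x\<in>carrier_vec n. chi w x) = 0" by (simp add: sum_negf)
  then show ?thesis using False by simp
qed


lemma vec_add_eq0:
  assumes "r \<in> carrier_vec n" "(a::bit Matrix.vec) \<in> carrier_vec n"
  shows "(r + a = 0\<^sub>v n) = (r = a)"
proof
  assume h: "r + a = 0\<^sub>v n"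
  have "r = r + a + a"
  proof (rule vec_eqI_n[of _ n])
    show "r \<in> carrier_vec n" by (rule assms(1))
    show "r + a + a \<in> carrier_vec n" using assms by simp
    fix i assume i: "i < n"
    have d: "dim_vec r = n" "dim_vec a = n" using assms unfolding carrier_vec_def by blast+
    have "vec_index (r + a + a) i = vec_index r i + vec_index a i + vec_index a i" using i d by simp
    then show "vec_index r i = vec_index (r + a + a) i" by (simp only: bit_add_self2)
  qed
  also have "\<dots> = a" using h assms by simp
  finally show "r = a" .
qed (use assms add_self_vec in auto)

abbreviation NN :: "nat \<Rightarrow> real" where "NN n \<equiv> real (card (carrier_vec n :: bit Matrix.vec set))"

lemma sum_chi_prod:
  assumes "r \<in> carrier_vec n" "a \<in> carrier_vec n"
  shows "(\<Sum>x\<in>carrier_vec n. chi r x * chi a x) = (if r = a then NN n else 0)"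
proof -
  have "(\<Sum>x\<in>carrier_vec n. chi r x * chi a x) = (\<Sum>x\<in>carrier_vec n. chi (r + a) x)"
    by (rule sum.cong) (use chi_add1 assms in auto)
  also have "\<dots> = (if r = a then NN n else 0)"
    using sum_chi[of "r + a" n] assms vec_add_eq0[OF assms] by simp
  finally show ?thesis .
qed

definition ind :: "bit \<Rightarrow> real" where "ind t = (if t = 1 then 1 else 0)"
definition sg :: "bit \<Rightarrow> int" where "sg c = (if c = 0 then 1 else -1)"

definition Fp :: "(bit Matrix.vec \<times> bit) list \<Rightarrow> bit Matrix.vec \<Rightarrow> real" where
  "Fp ps x = (\<Sum>i<length ps. ind (scalar_prod (fst (ps!i)) x + snd (ps!i)))"

definition K :: "nat \<Rightarrow> (bit Matrix.vec \<times> bit) list \<Rightarrow> bit Matrix.vec \<Rightarrow> int" where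
  "K n ps a = (\<Sum>i<length ps. (if a = 0\<^sub>v n then 1 else 0) - (if fst (ps!i) = a then sg (snd (ps!i)) else 0))"

lemma ind_chi: "ind (scalar_prod r x + c) = (1 - real_of_int (sg c) * chi r x) / 2"
  unfolding ind_def sg_def chi_def using bit_cases2[of "scalar_prod r x"] bit_cases2[of c] by auto

lemma fourier_term:
  assumes "r \<in> carrier_vec n" "a \<in> carrier_vec n"
  shows "(\<Sum>x\<in>carrier_vec n. ind (scalar_prod r x + c) * chi a x)
    = NN n / 2 * ((if a = 0\<^sub>v n then 1 else 0) - (if r = a then real_of_int (sg c) else 0))"
proof -
  have "(\<Sum>x\<in>carrier_vec n. ind (scalar_prod r x + c) * chi a x)
     = (\<Sum>x\<in>carrier_vec n. chi a x / 2 - real_of_int (sg c) / 2 * (chi r x * chi a x))"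
  proof (rule sum.cong)
    fix x show "ind (scalar_prod r x + c) * chi a x = chi a x / 2 - real_of_int (sg c) / 2 * (chi r x * chi a x)"
      unfolding ind_chi by (simp add: field_simps)
  qed simp
  also have "\<dots> = (\<Sum>x\<in>carrier_vec n. chi a x) / 2 - real_of_int (sg c) / 2 * (\<Sum>x\<in>carrier_vec n. chi r x * chi a x)"
    by (simp add: sum_subtractf sum_distrib_left sum_divide_distrib)
  also have "\<dots> = NN n / 2 * ((if a = 0\<^sub>v n then 1 else 0) - (if r = a then real_of_int (sg c) else 0))"
    using sum_chi[OF assms(2)] sum_chi_prod[OF assms] by (auto simp: field_simps)
  finally show ?thesis .
qed

lemma fourier_Fp:
  assumes "set ps \<subseteq> carrier_vec n \<times> UNIV" "a \<in> carrier_vec n"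
  shows "(\<Sum>x\<in>carrier_vec n. Fp ps x * chi a x) = NN n / 2 * real_of_int (K n ps a)"
proof -
  have "(\<Sum>x\<in>carrier_vec n. Fp ps x * chi a x)
      = (\<Sum>i<length ps. \<Sum>x\<in>carrier_vec n. ind (scalar_prod (fst (ps!i)) x + snd (ps!i)) * chi a x)"
    unfolding Fp_def sum_distrib_right by (rule sum.swap)
  also have "\<dots> = (\<Sum>i<length ps. NN n / 2 * ((if a = 0\<^sub>v n then 1 else 0) - (if fst (ps!i) = a then real_of_int (sg (snd (ps!i))) else 0)))"
  proof (rule sum.cong)
    fix i assume "i \<in> {..<length ps}"
    then have "ps ! i \<in> set ps" by (intro nth_mem) simp
    then have "ps ! i \<in> carrier_vec n \<times> UNIV" using assms(1) by blast
    then have "fst (ps!i) \<in> carrier_vec n" by (simp add: mem_Times_iff)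
    then show "(\<Sum>x\<in>carrier_vec n. ind (scalar_prod (fst (ps!i)) x + snd (ps!i)) * chi a x) = NN n / 2 * ((if a = 0\<^sub>v n then 1 else 0) - (if fst (ps!i) = a then real_of_int (sg (snd (ps!i))) else 0))"
      using fourier_term[OF _ assms(2)] by blast
  qed simp
  also have "\<dots> = NN n / 2 * real_of_int (K n ps a)"
    unfolding K_def of_int_sum sum_distrib_left by (rule sum.cong) auto
  finally show ?thesis .
qed

lemma inversion:
  assumes "y \<in> carrier_vec n"
  shows "(\<Sum>a\<in>carrier_vec n. chi a y * (\<Sum>x\<in>carrier_vec n. h x * chi a x)) = NN n * h y"
proof -
  have "(\<Sum>a\<in>carrier_vec n. chi a y * (\<Sum>x\<in>carrier_vec n. h x * chi a x))
     = (\<Sum>a\<in>carrier_vec n. \<Sum>x\<in>carrier_vec n. h x * (chi x a * chi y a))"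
    by (rule sum.cong) (auto simp: sum_distrib_left intro!: sum.cong simp: chi_comm[of _ n] assms)
  also have "\<dots> = (\<Sum>x\<in>carrier_vec n. h x * (\<Sum>a\<in>carrier_vec n. chi x a * chi y a))"
    by (subst sum.swap) (simp add: sum_distrib_left)
  also have "\<dots> = (\<Sum>x\<in>carrier_vec n. if x = y then NN n * h x else 0)"
    by (rule sum.cong) (auto simp: sum_chi_prod assms)
  also have "\<dots> = NN n * h y" using assms finite_V[of n] by simp
  finally show ?thesis .
qed


lemma ind_bounds: "0 \<le> ind t" "ind t \<le> 1" unfolding ind_def by auto

lemma Fp_bounds: "0 \<le> Fp ps x" "Fp ps x \<le> real (length ps)"
proof -
  show "0 \<le> Fp ps x" unfolding Fp_def by (rule sum_nonneg) (simp add: ind_bounds)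
  have "Fp ps x \<le> (\<Sum>i<length ps. 1)" unfolding Fp_def by (rule sum_mono) (simp add: ind_bounds)
  then show "Fp ps x \<le> real (length ps)" by simp
qed

lemma abs_chi: "\<bar>chi a x\<bar> = 1" unfolding chi_def by auto

lemma int_abs_ge1: "(k::int) \<noteq> 0 \<Longrightarrow> 1 \<le> \<bar>k\<bar>" by (simp add: abs_if)
lemma real_int_abs_ge1: "(k::int) \<noteq> 0 \<Longrightarrow> 1 \<le> \<bar>real_of_int k\<bar>"
proof -
  assume "k \<noteq> 0"
  then have "1 \<le> \<bar>k\<bar>" by (rule int_abs_ge1)
  then have "real_of_int 1 \<le> real_of_int \<bar>k\<bar>" by (simp only: of_int_le_iff)
  then show ?thesis by simp
qed

lemma disagree:
  assumes ps: "set ps \<subseteq> carrier_vec n \<times> UNIV" "length ps = n"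
    and qs: "set qs \<subseteq> carrier_vec n \<times> UNIV" "length qs = n"
    and y: "y \<in> carrier_vec n" "Fp ps y \<noteq> Fp qs y"
  shows "NN n \<le> 2 * real n * real (card {x\<in>carrier_vec n. Fp ps x \<noteq> Fp qs x})"
proof -
  define h where "h x = Fp ps x - Fp qs x" for x
  define D where "D = {x\<in>carrier_vec n. Fp ps x \<noteq> Fp qs x}"
  have S: "(\<Sum>x\<in>carrier_vec n. h x * chi a x) = NN n / 2 * real_of_int (K n ps a - K n qs a)"
    if a: "a \<in> carrier_vec n" for a
  proof -
    have "(\<Sum>x\<in>carrier_vec n. h x * chi a x) = (\<Sum>x\<in>carrier_vec n. Fp ps x * chi a x) - (\<Sum>x\<in>carrier_vec n. Fp qs x * chi a x)"
      unfolding h_def by (simp add: left_diff_distrib sum_subtractf)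
    also have "\<dots> = NN n / 2 * real_of_int (K n ps a - K n qs a)"
      using fourier_Fp[OF ps(1) a] fourier_Fp[OF qs(1) a] by (simp add: right_diff_distrib)
    finally show ?thesis .
  qed
  obtain a where a: "a \<in> carrier_vec n" "(\<Sum>x\<in>carrier_vec n. h x * chi a x) \<noteq> 0"
  proof (rule ccontr)
    assume "\<not> thesis"
    then have z: "\<And>a. a \<in> carrier_vec n \<Longrightarrow> (\<Sum>x\<in>carrier_vec n. h x * chi a x) = 0" using that by blast
    have "NN n * h y = (\<Sum>a\<in>carrier_vec n. chi a y * (\<Sum>x\<in>carrier_vec n. h x * chi a x))"
      using inversion[OF y(1)] by simp
    also have "\<dots> = 0" by (simp add: z)
    finally have "NN n * h y = 0" .
    then show False using card_V_pos[of n] y(2) unfolding h_def by simp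
  qed
  have k: "K n ps a - K n qs a \<noteq> 0" using a S by auto
  then have k2: "1 \<le> \<bar>real_of_int (K n ps a - K n qs a)\<bar>" by (rule real_int_abs_ge1)
  have e: "\<bar>\<Sum>x\<in>carrier_vec n. h x * chi a x\<bar> = NN n / 2 * \<bar>real_of_int (K n ps a - K n qs a)\<bar>"
    unfolding S[OF a(1)] abs_mult by simp
  have "NN n / 2 * 1 \<le> NN n / 2 * \<bar>real_of_int (K n ps a - K n qs a)\<bar>"
    by (rule mult_left_mono[OF k2]) simp
  then have "NN n / 2 \<le> \<bar>\<Sum>x\<in>carrier_vec n. h x * chi a x\<bar>" unfolding e by simp
  also have "\<dots> \<le> (\<Sum>x\<in>carrier_vec n. \<bar>h x * chi a x\<bar>)"
    by (rule sum_abs)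
  also have "\<dots> = (\<Sum>x\<in>carrier_vec n. \<bar>h x\<bar>)"
    by (rule sum.cong) (simp_all add: abs_mult abs_chi)
  also have "\<dots> = (\<Sum>x\<in>D. \<bar>h x\<bar>)"
    by (rule sum.mono_neutral_right) (auto simp: D_def h_def finite_V)
  also have "\<dots> \<le> (\<Sum>x\<in>D. real n)"
  proof (rule sum_mono)
    fix x show "\<bar>h x\<bar> \<le> real n"
      using Fp_bounds[of ps x] Fp_bounds[of qs x] ps(2) qs(2) unfolding h_def by linarith
  qed
  also have "\<dots> = real n * real (card D)" by simp
  finally show ?thesis unfolding D_def by simp
qed



lemma q_pow_le_half:
  assumes n: "n \<ge> (1::nat)"
  shows "(1 - 1 / (2 * real n)) ^ (2 * n) \<le> 1 / 2"
proof -
  have t: "1 - 1 / (2 * real n) \<le> exp (- (1 / (2 * real n)))"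
    using exp_ge_add_one_self[of "- (1 / (2 * real n))"] by simp
  have q0: "0 \<le> 1 - 1 / (2 * real n)" using n by (simp add: field_simps)
  have "(1 - 1 / (2 * real n)) ^ (2 * n) \<le> exp (- (1 / (2 * real n))) ^ (2 * n)"
    by (rule power_mono[OF t q0])
  also have "\<dots> = exp (real (2 * n) * (- (1 / (2 * real n))))"
    by (rule exp_of_nat_mult[symmetric])
  also have "real (2 * n) * (- (1 / (2 * real n))) = -1" using n by simp
  also have "exp (-1::real) = 1 / exp 1" by (simp add: exp_minus field_simps)
  also have "\<dots> \<le> 1 / 2"
    using exp_ge_add_one_self[of "1::real"] by (simp add: field_simps)
  finally show ?thesis .
qed

definition mm :: "nat \<Rightarrow> nat" where "mm n = 2 * n * (2 * n * n + 2 * n + 1)"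

lemma power_bound:
  assumes n: "n \<ge> (1::nat)" and N: "N \<le> (2::real) ^ n" "0 \<le> N"
  shows "(2 * N) ^ (2 * n) * (1 - 1 / (2 * real n)) ^ mm n \<le> 1 / 2"
proof -
  define q where "q = 1 - 1 / (2 * real n)"
  have q0: "0 \<le> q" using n by (simp add: q_def field_simps)
  have qh: "q ^ (2 * n) \<le> 1 / 2" using q_pow_le_half[OF n] by (simp add: q_def)
  have "(2 * N) ^ (2 * n) \<le> (2 * 2 ^ n) ^ (2 * n)"
    by (rule power_mono) (use N in auto)
  also have "\<dots> = 2 ^ ((n + 1) * (2 * n))"
    by (simp add: power_mult[symmetric] power_Suc[symmetric] del: power_Suc)
  finally have A: "(2 * N) ^ (2 * n) \<le> 2 ^ ((n + 1) * (2 * n))" .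
  have "q ^ mm n = (q ^ (2 * n)) ^ ((n + 1) * (2 * n) + 1)"
    unfolding mm_def power_mult[symmetric] by (simp add: algebra_simps)
  also have "\<dots> \<le> (1 / 2) ^ ((n + 1) * (2 * n) + 1)"
    by (rule power_mono[OF qh]) (simp add: q0)
  finally have B: "q ^ mm n \<le> (1 / 2) ^ ((n + 1) * (2 * n) + 1)" .
  have "(2 * N) ^ (2 * n) * q ^ mm n \<le> 2 ^ ((n + 1) * (2 * n)) * (1 / 2) ^ ((n + 1) * (2 * n) + 1)"
    by (rule mult_mono[OF A B]) (use q0 in auto)
  also have "\<dots> = 1 / 2" by (simp add: power_one_over)
  finally show ?thesis unfolding q_def .
qed


definition PS :: "nat \<Rightarrow> (bit Matrix.vec \<times> bit) list set" where
  "PS n = {ps. set ps \<subseteq> carrier_vec n \<times> UNIV \<and> length ps = n}"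

lemma finite_PS: "finite (PS n)"
  unfolding PS_def by (rule finite_lists_length_eq) (simp add: finite_V finite_bit)

lemma card_PS: "card (PS n) = (2 * card (carrier_vec n :: bit Matrix.vec set)) ^ n"
  unfolding PS_def card_lists_length_eq[OF finite_cartesian_product[OF finite_V finite_bit]]
  by (simp add: card_cartesian_product card_bit mult.commute)

lemma exists_xs:
  assumes n: "n \<ge> 1"
  shows "\<exists>xs. set xs \<subseteq> carrier_vec n \<and> length xs = mm n \<and>
     (\<forall>ps\<in>PS n. \<forall>qs\<in>PS n. (\<forall>x\<in>set xs. Fp ps x = Fp qs x) \<longrightarrow> (\<forall>x\<in>carrier_vec n. Fp ps x = Fp qs x))"
proof -
  define V where "V = (carrier_vec n :: bit Matrix.vec set)"
  define N where "N = card V"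
  define m where "m = mm n"
  define L where "L = {xs. set xs \<subseteq> V \<and> length xs = m}"
  define P where "P = {p \<in> PS n \<times> PS n. \<exists>y\<in>V. Fp (fst p) y \<noteq> Fp (snd p) y}"
  define E where "E p = {x\<in>V. Fp (fst p) x = Fp (snd p) x}" for p
  define B where "B = (\<Union>p\<in>P. {xs. set xs \<subseteq> E p \<and> length xs = m})"
  have fV: "finite V" unfolding V_def by (rule finite_V)
  have cardL: "card L = N ^ m" unfolding L_def N_def by (rule card_lists_length_eq[OF fV])
  have fP: "finite P" unfolding P_def using finite_PS by auto
  have fE: "finite (E p)" for p unfolding E_def using fV by auto
  have cardP: "card P \<le> (2 * N) ^ (2 * n)"
  proof -
    have "card P \<le> card (PS n \<times> PS n)"
      by (rule card_mono) (auto simp: P_def finite_PS)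
    also have "\<dots> = (2 * N) ^ (2 * n)"
      by (simp add: card_cartesian_product card_PS N_def V_def power_mult_distrib power_add[symmetric] mult_2)
    finally show ?thesis .
  qed
  have cardE: "real (card (E p)) \<le> real N * (1 - 1 / (2 * real n))" if p: "p \<in> P" for p
  proof -
    obtain ps qs where pq: "p = (ps, qs)" by (cases p)
    have ps: "set ps \<subseteq> carrier_vec n \<times> UNIV" "length ps = n" and qs: "set qs \<subseteq> carrier_vec n \<times> UNIV" "length qs = n"
      using p unfolding P_def PS_def pq by auto
    obtain y where y: "y \<in> V" "Fp ps y \<noteq> Fp qs y" using p unfolding P_def pq by auto
    define D where "D = {x\<in>V. Fp ps x \<noteq> Fp qs x}"
    have d: "real N \<le> 2 * real n * real (card D)"
      using disagree[OF ps qs y[unfolded V_def]] unfolding N_def D_def V_def .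
    have "E p \<union> D = V" "E p \<inter> D = {}" unfolding E_def D_def pq by auto
    then have "card (E p) + card D = N" unfolding N_def
      using card_Un_disjoint[OF fE] fV D_def by (metis finite_Un)
    then have "real (card (E p)) = real N - real (card D)" by linarith
    also have "\<dots> \<le> real N - real N / (2 * real n)"
      using d n by (simp add: field_simps)
    also have "\<dots> = real N * (1 - 1 / (2 * real n))" by (simp add: field_simps)
    finally show ?thesis .
  qed
  have "real (card B) \<le> (\<Sum>p\<in>P. real (card {xs. set xs \<subseteq> E p \<and> length xs = m}))"
  proof -
    have "card B \<le> (\<Sum>p\<in>P. card {xs. set xs \<subseteq> E p \<and> length xs = m})"
      unfolding B_def by (rule card_UN_le[OF fP])
    then have "real (card B) \<le> real (\<Sum>p\<in>P. card {xs. set xs \<subseteq> E p \<and> length xs = m})"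
      by (simp only: of_nat_le_iff)
    then show ?thesis by (simp only: of_nat_sum)
  qed
  also have "\<dots> = (\<Sum>p\<in>P. real (card (E p)) ^ m)"
    by (rule sum.cong) (simp_all add: card_lists_length_eq[OF fE])
  also have "\<dots> \<le> (\<Sum>p\<in>P. (real N * (1 - 1 / (2 * real n))) ^ m)"
    by (rule sum_mono, rule power_mono) (simp_all add: cardE)
  also have "\<dots> = real (card P) * (real N * (1 - 1 / (2 * real n))) ^ m" by simp
  also have "\<dots> \<le> (2 * real N) ^ (2 * n) * (real N * (1 - 1 / (2 * real n))) ^ m"
  proof (rule mult_right_mono)
    have "real (card P) \<le> real ((2 * N) ^ (2 * n))" using cardP by (simp only: of_nat_le_iff)
    then show "real (card P) \<le> (2 * real N) ^ (2 * n)" by simp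
    have "0 \<le> 1 - 1 / (2 * real n)" using n by (simp add: field_simps)
    then show "0 \<le> (real N * (1 - 1 / (2 * real n))) ^ m"
      by (intro zero_le_power mult_nonneg_nonneg) simp_all
  qed
  also have "\<dots> = real N ^ m * ((2 * real N) ^ (2 * n) * (1 - 1 / (2 * real n)) ^ mm n)"
    by (simp add: power_mult_distrib m_def)
  also have "\<dots> \<le> real N ^ m * (1 / 2)"
  proof (rule mult_left_mono)
    have c: "card V \<le> 2 ^ n" unfolding V_def by (rule card_V_le)
    have "real N \<le> real ((2::nat) ^ n)" unfolding N_def using c by (simp only: of_nat_le_iff)
    then have "real N \<le> 2 ^ n" by simp
    then show "(2 * real N) ^ (2 * n) * (1 - 1 / (2 * real n)) ^ mm n \<le> 1 / 2"
      by (rule power_bound[OF n]) simp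
  qed simp
  also have "\<dots> < real N ^ m"
    using card_V_pos[of n] unfolding N_def V_def by simp
  finally have "real (card B) < real (card L)" unfolding cardL by simp
  then have "card B < card L" by (simp only: of_nat_less_iff)
  then have "\<not> L \<subseteq> B"
  proof -
    have fB: "finite B" unfolding B_def using fP fE by (auto intro!: finite_lists_length_eq)
    show ?thesis using card_mono[OF fB] \<open>card B < card L\<close> by (meson not_le)
  qed
  then obtain xs where xs: "xs \<in> L" "xs \<notin> B" by auto
  have "\<forall>ps\<in>PS n. \<forall>qs\<in>PS n. (\<forall>x\<in>set xs. Fp ps x = Fp qs x) \<longrightarrow> (\<forall>x\<in>carrier_vec n. Fp ps x = Fp qs x)"
  proof (intro ballI impI)
    fix ps qs and x :: "bit Matrix.vec" assume ps: "ps \<in> PS n" and qs: "qs \<in> PS n" and ag: "\<forall>x\<in>set xs. Fp ps x = Fp qs x" and x: "x \<in> carrier_vec n"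
    show "Fp ps x = Fp qs x"
    proof (rule ccontr)
      assume ne: "Fp ps x \<noteq> Fp qs x"
      then have "(ps, qs) \<in> P" unfolding P_def using ps qs x V_def by auto
      moreover have "set xs \<subseteq> E (ps, qs)" using xs(1) ag unfolding L_def E_def by auto
      ultimately have "xs \<in> B" using xs(1) unfolding B_def L_def by auto
      then show False using xs(2) by simp
    qed
  qed
  moreover have "set xs \<subseteq> carrier_vec n" "length xs = mm n" using xs(1) unfolding L_def V_def m_def by auto
  ultimately show ?thesis by blast
qed



lemma affine_rep:
  assumes "f \<in> affine_onemax n"
  shows "\<exists>ps\<in>PS n. \<forall>x\<in>carrier_vec n. f x = Fp ps x"
proof -
  obtain M b where M: "M \<in> carrier_mat n n" and b: "b \<in> carrier_vec n"
    and f: "f = (\<lambda>x. onemax n (Matrix.mult_mat_vec M x + b))"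
    using assms unfolding affine_onemax_def by blast
  define ps where "ps = map (\<lambda>i. (Matrix.row M i, vec_index b i)) [0..<n]"
  have lps: "length ps = n" unfolding ps_def by simp
  have "set ps \<subseteq> carrier_vec n \<times> UNIV"
    unfolding ps_def using M by auto
  then have ps: "ps \<in> PS n" unfolding PS_def using lps by blast
  have dM: "dim_row M = n" using M by simp
  have db: "dim_vec b = n" using b by simp
  have "f x = Fp ps x" if x: "x \<in> carrier_vec n" for x
  proof -
    have "f x = (\<Sum>i<n. if vec_index (Matrix.mult_mat_vec M x + b) i = 1 then 1 else 0)"
      unfolding f onemax_def by simp
    also have "\<dots> = (\<Sum>i<n. ind (scalar_prod (fst (ps!i)) x + snd (ps!i)))"
    proof (rule sum.cong)
      fix i assume "i \<in> {..<n}"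
      then have i: "i < n" by simp
      have "vec_index (Matrix.mult_mat_vec M x + b) i = vec_index (Matrix.mult_mat_vec M x) i + vec_index b i"
        using i db by simp
      also have "\<dots> = scalar_prod (Matrix.row M i) x + vec_index b i"
        using i dM by simp
      finally show "(if vec_index (Matrix.mult_mat_vec M x + b) i = 1 then 1 else 0) = ind (scalar_prod (fst (ps!i)) x + snd (ps!i))"
        unfolding ind_def ps_def using i by simp
    qed simp
    also have "\<dots> = Fp ps x" unfolding Fp_def lps ..
    finally show ?thesis .
  qed
  then show ?thesis using ps by blast
qed

lemma maximizers_cong:
  assumes "\<forall>x\<in>carrier_vec n. f x = g x"
  shows "maximizers n f = maximizers n g"
  using assms unfolding maximizers_def by auto

lemma maximizers_ne: "maximizers n f \<noteq> {}"
proof -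
  define V where "V = (carrier_vec n :: bit Matrix.vec set)"
  have fV: "finite V" unfolding V_def by (rule finite_V)
  have ne: "V \<noteq> {}" unfolding V_def using zero_carrier_vec by blast
  have "Max (f ` V) \<in> f ` V" using fV ne by simp
  then obtain x where x: "x \<in> V" "f x = Max (f ` V)" by auto
  have "\<forall>y\<in>V. f y \<le> f x" using x fV by simp
  then have "x \<in> maximizers n f" using x unfolding maximizers_def V_def by blast
  then show ?thesis by blast
qed

definition chooseM :: "nat \<Rightarrow> (bit Matrix.vec \<times> real) list \<Rightarrow> bit Matrix.vec" where
  "chooseM n h = (if \<exists>y g. g \<in> affine_onemax n \<and> (\<forall>p\<in>set h. g (fst p) = snd p) \<and> y \<in> maximizers n g
     then SOME y. \<exists>g. g \<in> affine_onemax n \<and> (\<forall>p\<in>set h. g (fst p) = snd p) \<and> y \<in> maximizers n g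
     else 0\<^sub>v n)"

definition alg :: "nat \<Rightarrow> bit Matrix.vec list \<Rightarrow> bb_alg" where
  "alg n xs h = return_pmf (if length h < length xs then xs ! length h else chooseM n h)"

lemma chooseM_carrier: "chooseM n h \<in> carrier_vec n"
proof (cases "\<exists>y g. g \<in> affine_onemax n \<and> (\<forall>p\<in>set h. g (fst p) = snd p) \<and> y \<in> maximizers n g")
  case True
  then have "\<exists>g. g \<in> affine_onemax n \<and> (\<forall>p\<in>set h. g (fst p) = snd p) \<and> chooseM n h \<in> maximizers n g"
    unfolding chooseM_def by simp (rule someI_ex, blast)
  then show ?thesis unfolding maximizers_def by blast
next
  case False
  have "chooseM n h = 0\<^sub>v n" unfolding chooseM_def by (rule if_not_P[OF False])
  then show ?thesis by simp
qed

lemma valid_alg: "set xs \<subseteq> carrier_vec n \<Longrightarrow> valid_alg n (alg n xs)"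
  unfolding valid_alg_def alg_def using chooseM_carrier by auto

lemma hist_prefix:
  "t \<le> length xs \<Longrightarrow> hist (alg n xs) f t = return_pmf (map (\<lambda>x. (x, f x)) (take t xs))"
proof (induction t)
  case 0
  then show ?case by simp
next
  case (Suc t)
  then have t: "t < length xs" by simp
  have "hist (alg n xs) f (Suc t) = map_pmf (\<lambda>x. map (\<lambda>x. (x, f x)) (take t xs) @ [(x, f x)]) (alg n xs (map (\<lambda>x. (x, f x)) (take t xs)))"
    using Suc by (simp add: bind_return_pmf)
  also have "\<dots> = return_pmf (map (\<lambda>x. (x, f x)) (take t xs) @ [(xs ! t, f (xs ! t))])"
    unfolding alg_def using t by simp
  also have "\<dots> = return_pmf (map (\<lambda>x. (x, f x)) (take (Suc t) xs))"
    using t by (simp add: take_Suc_conv_app_nth)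
  finally show ?case .
qed


definition goodxs :: "nat \<Rightarrow> bit Matrix.vec list \<Rightarrow> bool" where
  "goodxs n xs \<longleftrightarrow> set xs \<subseteq> carrier_vec n \<and>
     (\<forall>ps\<in>PS n. \<forall>qs\<in>PS n. (\<forall>x\<in>set xs. Fp ps x = Fp qs x) \<longrightarrow> (\<forall>x\<in>carrier_vec n. Fp ps x = Fp qs x))"

lemma good_choice:
  assumes xs: "goodxs n xs" and f: "f \<in> affine_onemax n"
  shows "chooseM n (map (\<lambda>x. (x, f x)) xs) \<in> maximizers n f"
proof -
  define H where "H = map (\<lambda>x. (x, f x)) xs"
  define Q where "Q y = (\<exists>g. g \<in> affine_onemax n \<and> (\<forall>p\<in>set H. g (fst p) = snd p) \<and> y \<in> maximizers n g)" for y
  obtain y0 where y0: "y0 \<in> maximizers n f" using maximizers_ne by blast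
  have "\<forall>p\<in>set H. f (fst p) = snd p" unfolding H_def by auto
  then have ex: "\<exists>y. Q y" unfolding Q_def using f y0 by blast
  then have ex2: "\<exists>y g. g \<in> affine_onemax n \<and> (\<forall>p\<in>set H. g (fst p) = snd p) \<and> y \<in> maximizers n g"
    unfolding Q_def by blast
  have c: "chooseM n H = (SOME y. Q y)" unfolding chooseM_def Q_def by (rule if_P[OF ex2])
  have "Q (SOME y. Q y)" using ex by (rule someI_ex)
  then obtain g where g: "g \<in> affine_onemax n" "\<forall>p\<in>set H. g (fst p) = snd p" "chooseM n H \<in> maximizers n g"
    unfolding Q_def c by blast
  obtain ps where ps: "ps \<in> PS n" "\<forall>x\<in>carrier_vec n. f x = Fp ps x" using affine_rep[OF f] by blast
  obtain qs where qs: "qs \<in> PS n" "\<forall>x\<in>carrier_vec n. g x = Fp qs x" using affine_rep[OF g(1)] by blast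
  have sx: "set xs \<subseteq> carrier_vec n" using xs unfolding goodxs_def by blast
  have "\<forall>x\<in>set xs. g x = f x" using g(2) unfolding H_def by auto
  then have "\<forall>x\<in>set xs. Fp ps x = Fp qs x"
  proof (intro ballI)
    fix x assume x: "x \<in> set xs" and e: "\<forall>x\<in>set xs. g x = f x"
    have xv: "x \<in> carrier_vec n" using x sx by blast
    have "Fp ps x = f x" using ps(2) xv by simp
    also have "\<dots> = g x" using e x by simp
    also have "\<dots> = Fp qs x" using qs(2) xv by simp
    finally show "Fp ps x = Fp qs x" .
  qed
  then have "\<forall>x\<in>carrier_vec n. Fp ps x = Fp qs x" using xs ps(1) qs(1) unfolding goodxs_def by blast
  then have "\<forall>x\<in>carrier_vec n. g x = f x"
  proof (intro ballI)
    fix x :: "bit Matrix.vec" assume x: "x \<in> carrier_vec n" and e: "\<forall>x\<in>carrier_vec n. Fp ps x = Fp qs x"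
    have "g x = Fp qs x" using qs(2) x by simp
    also have "\<dots> = Fp ps x" using e x by simp
    also have "\<dots> = f x" using ps(2) x by simp
    finally show "g x = f x" .
  qed
  then have "maximizers n g = maximizers n f" by (rule maximizers_cong)
  then show ?thesis using g(3) unfolding H_def by simp
qed

lemma found_after:
  assumes xs: "goodxs n xs" and f: "f \<in> affine_onemax n" and t: "Suc (length xs) \<le> t"
  shows "\<forall>h\<in>set_pmf (hist (alg n xs) f t). \<exists>p\<in>set h. fst p \<in> maximizers n f"
  using t
proof (induction t rule: dec_induct)
  case base
  define H where "H = map (\<lambda>x. (x, f x)) xs"
  have hl: "hist (alg n xs) f (length xs) = return_pmf H"
    using hist_prefix[of "length xs" xs n f] unfolding H_def by simp
  have "hist (alg n xs) f (Suc (length xs)) = return_pmf (H @ [(chooseM n H, f (chooseM n H))])"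
    unfolding hist.simps hl bind_return_pmf alg_def H_def by simp
  moreover have "chooseM n H \<in> maximizers n f" unfolding H_def by (rule good_choice[OF xs f])
  ultimately show ?case by auto
next
  case (step m)
  show ?case
  proof
    fix h' assume "h' \<in> set_pmf (hist (alg n xs) f (Suc m))"
    then obtain h x where h: "h \<in> set_pmf (hist (alg n xs) f m)" and h': "h' = h @ [(x, f x)]"
      by auto
    then obtain p where "p \<in> set h" "fst p \<in> maximizers n f" using step.IH by blast
    then show "\<exists>p\<in>set h'. fst p \<in> maximizers n f" using h' by auto
  qed
qed

lemma runtime_bound:
  assumes xs: "goodxs n xs" and f: "f \<in> affine_onemax n"
  shows "expected_runtime n (alg n xs) f \<le> ennreal (real (Suc (length xs)))"
proof -
  define g where "g t = ennreal (measure_pmf.prob (hist (alg n xs) f t) {h. \<forall>p \<in> set h. fst p \<notin> maximizers n f})" for t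
  have z: "g t = 0" if "t \<notin> {..<Suc (length xs)}" for t
  proof -
    have t: "Suc (length xs) \<le> t" using that by simp
    have "set_pmf (hist (alg n xs) f t) \<inter> {h. \<forall>p \<in> set h. fst p \<notin> maximizers n f} = {}"
      using found_after[OF xs f t] by blast
    then have "measure_pmf.prob (hist (alg n xs) f t) {h. \<forall>p \<in> set h. fst p \<notin> maximizers n f} = 0"
      by (simp add: measure_pmf_zero_iff)
    then show ?thesis unfolding g_def by simp
  qed
  have "expected_runtime n (alg n xs) f = suminf g" unfolding expected_runtime_def g_def ..
  also have "\<dots> = (\<Sum>t<Suc (length xs). g t)" by (rule suminf_finite) (use z in auto)
  also have "\<dots> \<le> (\<Sum>t<Suc (length xs). 1)"
  proof (rule sum_mono)
    fix t show "g t \<le> 1" unfolding g_def using measure_pmf.prob_le_1 by (simp add: ennreal_leI)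
  qed
  also have "\<dots> = ennreal (real (Suc (length xs)))" by (simp add: ennreal_of_nat_eq_real_of_nat)
  finally show ?thesis .
qed

lemma bb_bound:
  assumes n: "n \<ge> 1"
  shows "bb_complexity n (affine_onemax n) \<le> ennreal (real (Suc (mm n)))"
proof -
  obtain xs where xs: "set xs \<subseteq> carrier_vec n" "length xs = mm n"
    "\<forall>ps\<in>PS n. \<forall>qs\<in>PS n. (\<forall>x\<in>set xs. Fp ps x = Fp qs x) \<longrightarrow> (\<forall>x\<in>carrier_vec n. Fp ps x = Fp qs x)"
    using exists_xs[OF n] by blast
  have g: "goodxs n xs" unfolding goodxs_def using xs by blast
  have "bb_complexity n (affine_onemax n) \<le> (SUP f \<in> affine_onemax n. expected_runtime n (alg n xs) f)"
    unfolding bb_complexity_def by (rule INF_lower) (simp add: valid_alg[OF xs(1)])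
  also have "\<dots> \<le> ennreal (real (Suc (mm n)))"
    by (rule SUP_least) (use runtime_bound[OF g] xs(2) in auto)
  finally show ?thesis .
qed



lemma mm_le: assumes n: "n \<ge> (2::nat)" shows "Suc (mm n) \<le> n ^ 10"
proof -
  have n1: "1 \<le> n" using n by simp
  have a: "n * n \<le> n * n * n" using n1 by simp
  have b: "n \<le> n * n * n" using n1 by (metis mult_le_mono mult_1 mult.commute le_trans a mult_le_mono1)
  have c: "1 \<le> n * n * n" using n1 b by linarith
  have "Suc (mm n) = 4 * (n * n * n) + 4 * (n * n) + 2 * n + 1" unfolding mm_def by (simp add: algebra_simps)
  also have "\<dots> \<le> 11 * (n * n * n)" using a b c by linarith
  also have "\<dots> \<le> 2 ^ 7 * (n * n * n)" by simp
  also have "\<dots> \<le> n ^ 7 * (n * n * n)" by (rule mult_right_mono[OF power_mono[OF n]]) simp_all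
  also have "\<dots> = n ^ 7 * n ^ 3" by (simp only: power3_eq_cube)
  also have "\<dots> = n ^ (7 + 3)" by (simp only: power_add)
  also have "\<dots> = n ^ 10" by simp
  finally show ?thesis .
qed

theorem corollary1:
  shows "\<exists>c::real. \<exists>N::nat. \<forall>n\<ge>N.
    bb_complexity n (affine_onemax n) \<le> ennreal (c * real n ^ 10 * (ln (real n))\<^sup>2)"
proof (intro exI allI impI)
  fix n :: nat assume n: "2 \<le> n"
  define c :: real where "c = 1 / (ln 2)^2"
  have l2: "0 < ln (2::real)" by simp
  have ln: "ln 2 \<le> ln (real n)" using n by simp
  have "(ln 2)^2 \<le> (ln (real n))^2" by (rule power_mono[OF ln]) (use l2 in simp)
  then have c1: "1 \<le> c * (ln (real n))^2" unfolding c_def using l2 by (simp add: field_simps)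
  have "bb_complexity n (affine_onemax n) \<le> ennreal (real (Suc (mm n)))"
    by (rule bb_bound) (use n in simp)
  also have "\<dots> \<le> ennreal (c * real n ^ 10 * (ln (real n))\<^sup>2)"
  proof (rule ennreal_leI)
    have "real (Suc (mm n)) \<le> real (n ^ 10)" using mm_le[OF n] by (simp only: of_nat_le_iff)
    also have "\<dots> = real n ^ 10 * 1" by simp
    also have "\<dots> \<le> real n ^ 10 * (c * (ln (real n))^2)" by (rule mult_left_mono[OF c1]) simp
    also have "\<dots> = c * real n ^ 10 * (ln (real n))\<^sup>2" by simp
    finally show "real (Suc (mm n)) \<le> c * real n ^ 10 * (ln (real n))\<^sup>2" .
  qed
  finally show "bb_complexity n (affine_onemax n) \<le> ennreal ((1 / (ln 2)^2) * real n ^ 10 * (ln (real n))\<^sup>2)"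
    unfolding c_def .
qed


end
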